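(* Let $A\in\mathbb{R}^{n\times m}$, let $b\in\mathbb{R}^n$ be a nonzero vector in the span of the columns of $A$, and let $c, c'\in\mathbb{R}^m$ have strictly positive entries. For positive $s\in\mathbb{R}^m$ let $\mathcal{E}_s(b) = \min_{y\in\mathbb{R}^m:\, A y = b} \sum_{i=1}^m s_i y_i^2$, and write $1/c$ for the vector $(1/c_i)_i$. Let $\phi = (A\,\mathbf{D}(c)A^\top)^+ b$. Then \[ \frac{1}{\mathcal{E}_{1/c'}(b)} \geq \frac{1}{\mathcal{E}_{1/c}(b)} + \frac{1}{\mathcal{E}_{1/c}(b)^2} \cdot \sum_{i=1}^m c_i\, (A^\top \phi)_i^2 \left(1-\frac{c_i}{c'_i}\right). \]
   Context: For a vector $c$, $\mathbf{D}(c)$ is the diagonal matrix with diagonal $c$; $L^+$ denotes the Moore–Penrose pseudoinverse of a symmetric matrix $L$. *)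

theory Defs
  imports "HOL-Analysis.Analysis"
begin

definition diag_mat :: "real ^ 'm \<Rightarrow> real ^ 'm ^ 'm" where
  "diag_mat c = (\<chi> i j. if i = j then c $ i else 0)"

definition mp_pinv :: "real ^ 'n ^ 'm \<Rightarrow> real ^ 'm ^ 'n" where
  "mp_pinv L = (THE X. L ** X ** L = L \<and> X ** L ** X = X \<and>
      transpose (L ** X) = L ** X \<and> transpose (X ** L) = X ** L)"

text \<open>Energy E_s(b) = min over y with A y = b of sum_i s_i y_i^2
  (the minimum is attained when b is in the column span of A and s > 0).\<close>
definition energy :: "real ^ 'm ^ 'n \<Rightarrow> real ^ 'm \<Rightarrow> real ^ 'n \<Rightarrow> real" where
  "energy A s b = Inf {(\<Sum>i\<in>UNIV. s $ i * (y $ i)\<^sup>2) | y. A *v y = b}"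

end

theory Submission imports Defs begin

lemma sym_mat_intro:
  fixes M :: "real^'n^'n"
  assumes "\<And>x y. (M *v x) \<bullet> y = x \<bullet> (M *v y)"
  shows "transpose M = M"
proof -
  have "transpose M *v x = M *v x" for x
  proof -
    have "(transpose M *v x) \<bullet> y = (M *v x) \<bullet> y" for y
      using assms[of x y] by (simp add: dot_lmul_matrix)
    hence "(transpose M *v x - M *v x) \<bullet> (transpose M *v x - M *v x) = 0"
      by (simp add: inner_diff_left)
    thus ?thesis by simp
  qed
  thus ?thesis by (simp add: matrix_eq)
qed

lemma sym_dot:
  fixes L :: "real^'n^'n"
  assumes "transpose L = L"
  shows "(L *v x) \<bullet> y = x \<bullet> (L *v y)"
  by (metis assms dot_lmul_matrix transpose_matrix_vector)

lemma pinv_exists: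
  fixes L :: "real^'n^'n"
  assumes symL: "transpose L = L"
  shows "\<exists>X. L ** X ** L = L \<and> X ** L ** X = X \<and> transpose (L ** X) = L ** X \<and> transpose (X ** L) = X ** L"
proof -
  have sym: "(L *v x) \<bullet> y = x \<bullet> (L *v y)" for x y using sym_dot[OF symL] .
  define V where "V = range (\<lambda>x. L *v x)"
  have subV: "subspace V" unfolding V_def
    by (intro real_vector.linear_subspace_image subspace_UNIV matrix_vector_mul_linear)
  obtain B where BV: "B \<subseteq> V" and orth: "pairwise orthogonal B" and n1: "\<And>x. x \<in> B \<Longrightarrow> norm x = 1"
     and indB: "independent B" and spB: "span B = V"
    using orthonormal_basis_subspace[OF subV] by blast
  have finB: "finite B" using indB by (simp add: independent_imp_finite)
  have dotB: "\<And>u v. u\<in>B \<Longrightarrow> v\<in>B \<Longrightarrow> u \<bullet> v = (if u = v then 1 else 0)"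
    using orth n1 by (auto simp: orthogonal_def pairwise_def norm_eq_1)
  define p where "p x = (\<Sum>u\<in>B. (x \<bullet> u) *\<^sub>R u)" for x
  have linp: "linear p" unfolding p_def
    by (rule linearI) (simp_all add: inner_add_left scaleR_add_left sum.distrib scale_sum_right)
  have pV: "p x \<in> V" for x
    unfolding p_def spB[symmetric] by (intro span_sum span_scale span_base) 
  have porth_B: "(x - p x) \<bullet> v = 0" if "v \<in> B" for x v
  proof -
    have "p x \<bullet> v = (\<Sum>u\<in>B. (x \<bullet> u) * (u \<bullet> v))" unfolding p_def by (simp add: inner_sum_left)
    also have "\<dots> = (\<Sum>u\<in>B. if u = v then x \<bullet> v else 0)" by (rule sum.cong) (auto simp: dotB that)
    also have "\<dots> = x \<bullet> v" using finB that by simp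
    finally show ?thesis by (simp add: inner_diff_left)
  qed
  have porth: "(x - p x) \<bullet> v = 0" if "v \<in> V" for x v
    using orthogonal_to_span[of v B "x - p x"] porth_B that spB by (auto simp: orthogonal_def)
  have pid: "p v = v" if "v \<in> V" for v
  proof -
    have "v - p v \<in> V" using that pV subV by (simp add: subspace_diff)
    hence "(v - p v) \<bullet> (v - p v) = 0" using porth by blast
    thus ?thesis by simp
  qed
  have psym: "p x \<bullet> y = x \<bullet> p y" for x y
  proof -
    have "p x \<bullet> (y - p y) = 0" using porth[OF pV] by (simp add: inner_commute)
    moreover have "(x - p x) \<bullet> p y = 0" using porth[OF pV] .
    ultimately show ?thesis by (simp add: inner_diff_left inner_diff_right inner_commute)
  qed
  have kerorth: "L *v z = 0" if "\<And>v. v \<in> V \<Longrightarrow> z \<bullet> v = 0" for z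
  proof -
    have "(L *v z) \<bullet> (L *v z) = z \<bullet> (L *v (L *v z))" by (rule sym)
    also have "\<dots> = 0" using that V_def by blast
    finally show ?thesis by simp
  qed
  have Lp: "L *v p x = L *v x" for x
  proof -
    have "L *v (x - p x) = 0" using kerorth porth by blast
    thus ?thesis by (simp add: matrix_vector_mult_diff_distrib)
  qed
  have spV: "span V = V" using subV by (simp add: span_eq_iff)
  have injV: "inj_on (\<lambda>x. L *v x) (span V)"
  proof (rule inj_onI)
    fix x y assume "x \<in> span V" "y \<in> span V" and eq: "L *v x = L *v y"
    hence xy: "x - y \<in> V" using subV spV by (simp add: subspace_diff)
    have "L *v (x - y) = 0" using eq by (simp add: matrix_vector_mult_diff_distrib)
    hence "(x - y) \<bullet> v = 0" if "v \<in> V" for v using that unfolding V_def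
      by (auto simp flip: sym)
    hence "(x-y)\<bullet>(x-y) = 0" using xy by blast
    thus "x = y" by simp
  qed
  obtain h where hV: "range h \<subseteq> span V" and linh: "linear h" and hL: "\<forall>x\<in>span V. h (L *v x) = x"
    using linear_inj_on_left_inverse[OF matrix_vector_mul_linear injV] by blast
  define X where "X = matrix (h \<circ> p)"
  have Xv: "X *v y = h (p y)" for y unfolding X_def using linear_compose[OF linp linh] 
    by (simp add: matrix_works)
  have LX: "L *v (X *v y) = p y" for y
  proof -
    obtain w where w: "p y = L *v w" using pV V_def by blast
    have "h (p y) = p w" using hL pV spV w Lp by metis
    thus ?thesis using Xv w Lp by simp
  qed
  have XL: "X *v (L *v x) = p x" for x
    using Xv pid[of "L *v x"] V_def Lp hL pV spV by (metis rangeI)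
  have XV: "X *v y \<in> V" for y using Xv hV spV by auto
  show ?thesis
  proof (intro exI conjI)
    show "L ** X ** L = L"
      by (simp add: matrix_eq LX XL pid V_def Lp flip: matrix_vector_mul_assoc)
    show "X ** L ** X = X"
    proof -
      have "X *v (L *v (X *v y)) = X *v y" for y using XL[of "X *v y"] pid[OF XV] by simp
      thus ?thesis by (simp add: matrix_eq flip: matrix_vector_mul_assoc)
    qed
    show "transpose (L ** X) = L ** X"
      by (rule sym_mat_intro) (simp add: LX psym flip: matrix_vector_mul_assoc)
    show "transpose (X ** L) = X ** L"
      by (rule sym_mat_intro) (simp add: XL psym flip: matrix_vector_mul_assoc)
  qed
qed



lemma pinv_unique:
  fixes L :: "real^'n^'m" and X Y :: "real^'m^'n"
  assumes X1: "L ** X ** L = L" and X2: "X ** L ** X = X"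
    and X3: "transpose (L ** X) = L ** X" and X4: "transpose (X ** L) = X ** L"
    and Y1: "L ** Y ** L = L" and Y2: "Y ** L ** Y = Y"
    and Y3: "transpose (L ** Y) = L ** Y" and Y4: "transpose (Y ** L) = Y ** L"
  shows "X = Y"
proof -
  have "X = X ** (L ** X)" using X2 by (simp add: matrix_mul_assoc)
  also have "\<dots> = X ** transpose (L ** X)" using X3 by simp
  also have "\<dots> = X ** (transpose X ** transpose (L ** Y ** L))" using Y1 by (simp add: matrix_transpose_mul)
  also have "\<dots> = X ** transpose (L ** X) ** transpose (L ** Y)"
    by (simp add: matrix_transpose_mul matrix_mul_assoc)
  also have "\<dots> = (X ** L ** X) ** L ** Y" using X3 Y3 by (simp add: matrix_mul_assoc)
  also have "\<dots> = X ** L ** Y" using X2 by simp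
  finally have eX: "X = X ** L ** Y" .
  have "Y = (Y ** L) ** Y" using Y2 by simp
  also have "\<dots> = transpose (Y ** L) ** Y" using Y4 by simp
  also have "\<dots> = transpose (L ** X ** L) ** transpose Y ** Y" using X1 by (simp add: matrix_transpose_mul matrix_mul_assoc)
  also have "\<dots> = transpose (X ** L) ** transpose (Y ** L) ** Y"
    by (simp add: matrix_transpose_mul matrix_mul_assoc)
  also have "\<dots> = X ** L ** (Y ** L ** Y)" using X4 Y4 by (simp add: matrix_mul_assoc)
  also have "\<dots> = X ** L ** Y" using Y2 by simp
  finally show ?thesis using eX by simp
qed

lemma mp_pinv_props:
  fixes L :: "real^'n^'n"
  assumes "transpose L = L"
  shows "L ** mp_pinv L ** L = L \<and> mp_pinv L ** L ** mp_pinv L = mp_pinv L \<and>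
      transpose (L ** mp_pinv L) = L ** mp_pinv L \<and> transpose (mp_pinv L ** L) = mp_pinv L ** L"
proof -
  obtain X where X: "L ** X ** L = L \<and> X ** L ** X = X \<and> transpose (L ** X) = L ** X \<and> transpose (X ** L) = X ** L"
    using pinv_exists[OF assms] by blast
  have "mp_pinv L = X" unfolding mp_pinv_def
    by (rule the_equality) (use X pinv_unique in blast)+
  thus ?thesis using X by simp
qed


lemma diag_mult: "diag_mat c *v u = (\<chi> i. c $ i * u $ i)"
proof -
  have "(if i = j then c $ i else 0) * u $ j = (if i = j then c $ i * u $ j else 0)" for i j :: 'a
    by simp
  thus ?thesis by (simp add: diag_mat_def matrix_vector_mult_def vec_eq_iff)
qed

lemma diag_transpose: "transpose (diag_mat c) = diag_mat c"
  by (simp add: diag_mat_def transpose_def vec_eq_iff)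

lemma adj: fixes A :: "real^'m^'n" shows "z \<bullet> (A *v w) = (transpose A *v z) \<bullet> w"
  by (simp add: dot_lmul_matrix)

lemma in_range:
  fixes A :: "real^'m^'n"
  assumes "b \<in> span (columns A)"
  shows "\<exists>z. b = A *v z"
proof -
  have "span (columns A) \<subseteq> range (\<lambda>z. A *v z)"
  proof (rule span_minimal)
    show "columns A \<subseteq> range (\<lambda>z. A *v z)"
      unfolding columns_def by (auto simp flip: matrix_vector_mult_basis)
    show "subspace (range (\<lambda>z. A *v z))"
      by (intro real_vector.linear_subspace_image subspace_UNIV matrix_vector_mul_linear)
  qed
  thus ?thesis using assms by blast
qed

theorem lemma4p4:
  fixes A :: "real ^ 'm ^ 'n" and b :: "real ^ 'n" and c c' :: "real ^ 'm"
  assumes "b \<noteq> 0"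
    and "b \<in> span (columns A)"
    and "\<And>i. c $ i > 0"
    and "\<And>i. c' $ i > 0"
  defines "\<phi> \<equiv> mp_pinv (A ** diag_mat c ** transpose A) *v b"
  shows "1 / energy A (\<chi> i. 1 / c' $ i) b \<ge>
           1 / energy A (\<chi> i. 1 / c $ i) b
           + 1 / (energy A (\<chi> i. 1 / c $ i) b)\<^sup>2 *
             (\<Sum>i\<in>UNIV. c $ i * ((transpose A *v \<phi>) $ i)\<^sup>2 * (1 - c $ i / c' $ i))"
proof -
  note cpos = assms(3) and c'pos = assms(4)
  obtain z0 where z0: "b = A *v z0" using in_range[OF assms(2)] by blast
  define L where "L = A ** diag_mat c ** transpose A"
  have symL: "transpose L = L" unfolding L_def
    by (simp add: matrix_transpose_mul diag_transpose matrix_mul_assoc)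
  define X where "X = mp_pinv L"
  have X1: "L ** X ** L = L" and X3: "transpose (L ** X) = L ** X"
    using mp_pinv_props[OF symL] unfolding X_def by auto
  have Lv: "L *v z = A *v (diag_mat c *v (transpose A *v z))" for z
    unfolding L_def by (simp only: matrix_vector_mul_assoc matrix_mul_assoc)
  have quad: "z \<bullet> (L *v z) = (\<Sum>i\<in>UNIV. c $ i * ((transpose A *v z) $ i)\<^sup>2)" for z
    unfolding Lv adj[of z A] by (simp add: diag_mult inner_vec_def power2_eq_square mult_ac)
  define r where "r = b - L *v (X *v b)"
  have ra: "r \<bullet> (L *v w) = 0" for w
  proof -
    have "((L ** X) *v b) \<bullet> (L *v w) = b \<bullet> ((L ** X) *v (L *v w))"
      using sym_dot[OF X3] .
    also have "\<dots> = b \<bullet> (L *v w)" using X1 by (simp add: matrix_vector_mul_assoc)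
    finally show ?thesis unfolding r_def by (simp add: inner_diff_left matrix_vector_mul_assoc)
  qed
  have "r \<bullet> (L *v r) = 0" using ra .
  hence "(\<Sum>i\<in>UNIV. c $ i * ((transpose A *v r) $ i)\<^sup>2) = 0" using quad by simp
  hence "\<forall>i\<in>UNIV. c $ i * ((transpose A *v r) $ i)\<^sup>2 = 0"
    by (subst sum_nonneg_eq_0_iff[symmetric]) (auto intro!: mult_nonneg_nonneg less_imp_le[OF cpos])
  hence ATr: "transpose A *v r = 0" using cpos by (auto simp: vec_eq_iff) (metis less_irrefl)
  have "r \<bullet> r = r \<bullet> b - r \<bullet> (L *v (X *v b))" unfolding r_def by (simp add: inner_diff_right)
  also have "\<dots> = 0" using ra ATr z0 adj[of r A z0] by simp
  finally have Lphi: "L *v \<phi> = b" unfolding r_def \<phi>_def X_def L_def by simp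
  define g where "g = transpose A *v \<phi>"
  define y0 where "y0 = (\<chi> i. c $ i * g $ i)"
  have Ay0: "A *v y0 = b"
    using Lphi Lv[of \<phi>] unfolding y0_def g_def by (simp add: diag_mult)
  define G where "G = (\<Sum>i\<in>UNIV. c $ i * (g $ i)\<^sup>2)"
  have gy: "(\<Sum>i\<in>UNIV. g $ i * y $ i) = G" if "A *v y = b" for y
  proof -
    have "(\<Sum>i\<in>UNIV. g $ i * y $ i) = \<phi> \<bullet> b"
      using adj[of \<phi> A y] that unfolding g_def by (simp add: inner_vec_def)
    also have "\<dots> = (\<Sum>i\<in>UNIV. g $ i * y0 $ i)"
      using adj[of \<phi> A y0] Ay0 unfolding g_def by (simp add: inner_vec_def)
    also have "\<dots> = G" unfolding G_def y0_def by (simp add: power2_eq_square mult_ac)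
    finally show ?thesis .
  qed
  define E where "E = energy A (\<chi> i. 1 / c $ i) b"
  have EG: "E = G"
    unfolding E_def energy_def
  proof (rule cInf_eq_minimum)
    show "G \<in> {\<Sum>i\<in>UNIV. (\<chi> i. 1 / c $ i) $ i * (y $ i)\<^sup>2 |y. A *v y = b}"
    proof (intro CollectI exI conjI)
      show "A *v y0 = b" by (rule Ay0)
      show "G = (\<Sum>i\<in>UNIV. (\<chi> i. 1 / c $ i) $ i * (y0 $ i)\<^sup>2)"
        unfolding G_def y0_def using cpos
        by (intro sum.cong) (auto simp: power2_eq_square field_simps less_imp_neq[symmetric])
    qed
    fix x assume "x \<in> {\<Sum>i\<in>UNIV. (\<chi> i. 1 / c $ i) $ i * (y $ i)\<^sup>2 |y. A *v y = b}"
    then obtain y where y: "A *v y = b" and x: "x = (\<Sum>i\<in>UNIV. 1 / c $ i * (y $ i)\<^sup>2)" by auto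
    have trm: "1 / c $ i * (y $ i)\<^sup>2 = 1 / c $ i * (y $ i - c $ i * g $ i)\<^sup>2 + 2 * (g $ i * y $ i) - c $ i * (g $ i)\<^sup>2" for i
      using cpos[of i] by (simp add: field_simps power2_eq_square less_imp_neq[symmetric])
    have nn: "0 \<le> (\<Sum>i\<in>UNIV. 1 / c $ i * (y $ i - c $ i * g $ i)\<^sup>2)"
      using cpos by (intro sum_nonneg) (simp add: less_imp_le)
    have "x = (\<Sum>i\<in>UNIV. 1 / c $ i * (y $ i - c $ i * g $ i)\<^sup>2) + 2 * (\<Sum>i\<in>UNIV. g $ i * y $ i) - G"
      unfolding x G_def by (subst trm) (simp add: sum.distrib sum_subtractf sum_distrib_left)
    thus "G \<le> x" using nn gy[OF y] by simp
  qed
  define E' where "E' = energy A (\<chi> i. 1 / c' $ i) b"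
  define H where "H = (\<Sum>i\<in>UNIV. 1 / c' $ i * (c $ i * g $ i)\<^sup>2)"
  define S where "S = {\<Sum>i\<in>UNIV. (\<chi> i. 1 / c' $ i) $ i * (y $ i)\<^sup>2 |y. A *v y = b}"
  have Sne: "S \<noteq> {}" unfolding S_def using Ay0 by auto
  have Sbdd: "bdd_below S" unfolding S_def using c'pos
    by (intro bdd_belowI[of _ 0]) (auto intro!: sum_nonneg simp: less_imp_le)
  have E'H: "E' \<le> H" unfolding E'_def energy_def S_def[symmetric]
  proof (rule cInf_lower[OF _ Sbdd])
    show "H \<in> S" unfolding S_def H_def
      by (intro CollectI exI[of _ y0] conjI Ay0) (simp add: y0_def)
  qed
  define u where "u = transpose A *v b"
  define K where "K = (\<Sum>i\<in>UNIV. c' $ i * (u $ i)\<^sup>2)"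
  have bb: "b \<bullet> b > 0" using assms(1) by simp
  have uy: "(\<Sum>i\<in>UNIV. u $ i * y $ i) = b \<bullet> b" if "A *v y = b" for y
    using adj[of b A y] that unfolding u_def by (simp add: inner_vec_def)
  have Kpos: "K > 0"
  proof -
    have K0: "0 \<le> K" unfolding K_def using c'pos by (intro sum_nonneg) (simp add: less_imp_le)
    { assume "K = 0"
      hence "\<forall>i\<in>UNIV. c' $ i * (u $ i)\<^sup>2 = 0" unfolding K_def
        by (subst sum_nonneg_eq_0_iff[symmetric]) (auto intro!: mult_nonneg_nonneg less_imp_le[OF c'pos])
      hence "u = 0" using c'pos by (auto simp: vec_eq_iff) (metis less_irrefl)
      hence "b \<bullet> b = 0" using uy[of z0] z0 by simp
      hence False using bb by simp }
    thus ?thesis using K0 by force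
  qed
  define t where "t = (b \<bullet> b) / K"
  have E'pos: "E' \<ge> (b \<bullet> b) * t - 0"
    unfolding E'_def energy_def S_def[symmetric]
  proof (rule cInf_greatest[OF Sne])
    fix x assume "x \<in> S"
    then obtain y where y: "A *v y = b" and x: "x = (\<Sum>i\<in>UNIV. 1 / c' $ i * (y $ i)\<^sup>2)" unfolding S_def by auto
    have trm: "1 / c' $ i * (y $ i)\<^sup>2 = 1 / c' $ i * (y $ i - t * c' $ i * u $ i)\<^sup>2 + 2 * t * (u $ i * y $ i) - t\<^sup>2 * (c' $ i * (u $ i)\<^sup>2)" for i
      using c'pos[of i] by (simp add: field_simps power2_eq_square less_imp_neq[symmetric])
    have nn: "0 \<le> (\<Sum>i\<in>UNIV. 1 / c' $ i * (y $ i - t * c' $ i * u $ i)\<^sup>2)"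
      using c'pos by (intro sum_nonneg) (simp add: less_imp_le)
    have "x = (\<Sum>i\<in>UNIV. 1 / c' $ i * (y $ i - t * c' $ i * u $ i)\<^sup>2) + 2 * t * (\<Sum>i\<in>UNIV. u $ i * y $ i) - t\<^sup>2 * K"
      unfolding x K_def by (subst trm) (simp add: sum.distrib sum_subtractf sum_distrib_left)
    also have "\<dots> \<ge> (b \<bullet> b) * t"
    proof -
      have "t\<^sup>2 * K = (b \<bullet> b) * t" unfolding t_def using Kpos by (simp add: power2_eq_square field_simps)
      thus ?thesis using nn uy[OF y] by simp
    qed
    finally show "(b \<bullet> b) * t - 0 \<le> x" by simp
  qed
  have tpos: "t > 0" unfolding t_def using bb Kpos by simp
  have E'p: "E' > 0" using E'pos tpos bb by (smt (verit) mult_pos_pos)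
  have Gpos: "G > 0"
  proof -
    have G0: "0 \<le> G" unfolding G_def using cpos by (intro sum_nonneg) (simp add: less_imp_le)
    { assume "G = 0"
      hence "\<forall>i\<in>UNIV. c $ i * (g $ i)\<^sup>2 = 0" unfolding G_def
        by (subst sum_nonneg_eq_0_iff[symmetric]) (auto intro!: mult_nonneg_nonneg less_imp_le[OF cpos])
      hence "y0 = 0" using cpos unfolding y0_def by (auto simp: vec_eq_iff)
      hence False using Ay0 assms(1) by simp }
    thus ?thesis using G0 by force
  qed
  have Hpos: "H > 0"
  proof -
    have H0: "0 \<le> H" unfolding H_def using c'pos by (intro sum_nonneg) (simp add: less_imp_le)
    { assume "H = 0"
      hence "\<forall>i\<in>UNIV. 1 / c' $ i * (c $ i * g $ i)\<^sup>2 = 0" unfolding H_def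
        by (subst sum_nonneg_eq_0_iff[symmetric]) (auto simp: less_imp_le[OF c'pos])
      hence "y0 = 0" using c'pos unfolding y0_def by (auto simp: vec_eq_iff) (metis less_irrefl)
      hence False using Ay0 assms(1) by simp }
    thus ?thesis using H0 by force
  qed
  have SGH: "(\<Sum>i\<in>UNIV. c $ i * ((transpose A *v \<phi>) $ i)\<^sup>2 * (1 - c $ i / c' $ i)) = G - H"
  proof -
    have "c $ i * (g $ i)\<^sup>2 * (1 - c $ i / c' $ i) = c $ i * (g $ i)\<^sup>2 - 1 / c' $ i * (c $ i * g $ i)\<^sup>2" for i
      using c'pos[of i] by (simp add: field_simps power2_eq_square less_imp_neq[symmetric])
    thus ?thesis unfolding G_def H_def g_def[symmetric] by (simp add: sum_subtractf)
  qed
  have "1 / E' \<ge> 1 / H" using E'H E'p by (simp add: frac_le)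
  moreover have "1 / H - (1 / G + 1 / G\<^sup>2 * (G - H)) = (G - H)\<^sup>2 / (H * G\<^sup>2)"
    using Gpos Hpos by (simp add: field_simps power2_eq_square)
  moreover have "(G - H)\<^sup>2 / (H * G\<^sup>2) \<ge> 0" using Gpos Hpos by simp
  ultimately show ?thesis unfolding E'_def[symmetric] E_def[symmetric] EG SGH by linarith
qed

end
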